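(* Let $M_\bullet=(M_n,\mathrm{tr}_n,e_{n+1})_{n\ge0}$ be a Markov tower of modulus $d$, and for $n\ge1$ let $E_{n+1}:M_{n+1}\to M_n$ be the trace-preserving conditional expectation. Then for all $n\ge1$: (1) the map $M_n\ni y\mapsto ye_n\in M_{n+1}$ is injective; (2) for all $x\in M_{n+1}$, $d^2E_{n+1}(xe_n)$ is the unique $y\in M_n$ with $xe_n=ye_n$; (3) $\mathrm{tr}_{n+1}(xe_n)=d^{-2}\mathrm{tr}_n(x)$ for all $x\in M_n$; (4) $e_nM_{n+1}e_n=M_{n-1}e_n$; (5) $X_{n+1}:=M_ne_nM_n$ (linear span) is a two-sided ideal of $M_{n+1}$, so $M_{n+1}=X_{n+1}\oplus Y_{n+1}$ as von Neumann algebras (set $X_0=X_1=(0)$, $Y_0=M_0$, $Y_1=M_1$); (6) $ae_nb\mapsto ap_nb$ defines a $*$-isomorphism from $X_{n+1}$ onto the Jones basic construction $\langle M_n,p_n\rangle=M_np_nM_n$ of $M_{n-1}\subset(M_n,\mathrm{tr}_n)$ acting on $L^2(M_n,\mathrm{tr}_n)$, where $p_n$ is the Jones projection; (7) under this isomorphism, the canonical trace $\mathrm{Tr}_{n+1}$ on $M_np_nM_n$ (with $\mathrm{Tr}_{n+1}(ap_nb)=\mathrm{tr}_n(ab)$) equals $d^2\mathrm{tr}_{n+1}|_{X_{n+1}}$; (8) if $y\in Y_{n+1}$ and $x\in X_n$ then $yx=0$ in $M_{n+1}$; hence $E_{n+1}(Y_{n+1})\subseteq Y_n$; (9) if $Y_n=(0)$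 then $Y_k=(0)$ for all $k\ge n$.
   Context: A Markov tower $M_\bullet=(M_n,\mathrm{tr}_n,e_{n+1})_{n\ge0}$ is a sequence of finite-dimensional von Neumann algebras with unital inclusions $M_n\subset M_{n+1}$, faithful tracial states with $\mathrm{tr}_{n+1}|_{M_n}=\mathrm{tr}_n$, and projections $e_n\in M_{n+1}$ ($n\ge1$) such that: (M1) $e_i=e_i^2=e_i^*$, $e_ie_j=e_je_i$ for $|i-j|>1$, and $e_ie_{i\pm1}e_i=d^{-2}e_i$ for a fixed $d>0$ (the modulus); (M2) $e_nxe_n=E_n(x)e_n$ for $x\in M_n$, where $E_n:M_n\to M_{n-1}$ is the trace-preserving conditional expectation; (M3) $E_{n+1}(e_n)=d^{-2}$; (M4) $M_{n+1}e_n=M_ne_n$. It is connected if $\dim M_0=1$. *)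

theory Defs
  imports Complex_Main
begin

text \<open>The Markov tower is realised inside an ambient complex unital *-algebra
  (e.g. its algebraic inductive limit), so that the unital inclusions
  M_n \<subseteq> M_(n+1) are literal set inclusions sharing the unit 1.\<close>

class complex_star_algebra = ring_1 +
  fixes cscale :: "complex \<Rightarrow> 'a \<Rightarrow> 'a"
    and astar :: "'a \<Rightarrow> 'a"
  assumes cscale_add_right: "cscale c (x + y) = cscale c x + cscale c y"
    and cscale_add_left: "cscale (b + c) x = cscale b x + cscale c x"
    and cscale_cscale: "cscale b (cscale c x) = cscale (b * c) x"
    and cscale_one: "cscale 1 x = x"
    and mult_cscale_left: "cscale c x * y = cscale c (x * y)"
    and mult_cscale_right: "x * cscale c y = cscale c (x * y)"
    and astar_astar: "astar (astar x) = x"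
    and astar_add: "astar (x + y) = astar x + astar y"
    and astar_mult: "astar (x * y) = astar y * astar x"
    and astar_cscale: "astar (cscale c x) = cscale (cnj c) (astar x)"

definition clin_span :: "'a::complex_star_algebra set \<Rightarrow> 'a set" where
  "clin_span S = {(\<Sum>i<k. cscale (c i) (v i)) | (k::nat) c v. \<forall>i<k. v i \<in> S}"

definition fd_star_subalg :: "'a::complex_star_algebra set \<Rightarrow> bool" where
  "fd_star_subalg A \<longleftrightarrow>
     (\<exists>B. finite B \<and> B \<subseteq> A \<and> A = clin_span B) \<and>
     1 \<in> A \<and>
     (\<forall>x\<in>A. \<forall>y\<in>A. x + y \<in> A \<and> x * y \<in> A) \<and>
     (\<forall>c. \<forall>x\<in>A. cscale c x \<in> A) \<and>
     (\<forall>x\<in>A. astar x \<in> A)"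

definition faithful_tracial_state ::
  "'a::complex_star_algebra set \<Rightarrow> ('a \<Rightarrow> complex) \<Rightarrow> bool" where
  "faithful_tracial_state A t \<longleftrightarrow>
     (\<forall>x\<in>A. \<forall>y\<in>A. t (x + y) = t x + t y) \<and>
     (\<forall>c. \<forall>x\<in>A. t (cscale c x) = c * t x) \<and>
     t 1 = 1 \<and>
     (\<forall>x\<in>A. \<forall>y\<in>A. t (x * y) = t (y * x)) \<and>
     (\<forall>x\<in>A. t (astar x * x) \<in> \<real> \<and> Re (t (astar x * x)) \<ge> 0) \<and>
     (\<forall>x\<in>A. x \<noteq> 0 \<longrightarrow> Re (t (astar x * x)) > 0)"

definition condexp ::
  "(nat \<Rightarrow> 'a::complex_star_algebra set) \<Rightarrow> (nat \<Rightarrow> 'a \<Rightarrow> complex) \<Rightarrow> nat \<Rightarrow> 'a \<Rightarrow> 'a" where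
  "condexp M tr n x =
     (THE y. y \<in> M (n - 1) \<and> (\<forall>b\<in>M (n - 1). tr n (b * y) = tr n (b * x)))"

text \<open>Markov tower of modulus d (axioms (M1)--(M4)); e 0 is unused.\<close>
definition markov_tower ::
  "(nat \<Rightarrow> 'a::complex_star_algebra set) \<Rightarrow> (nat \<Rightarrow> 'a \<Rightarrow> complex) \<Rightarrow> (nat \<Rightarrow> 'a) \<Rightarrow> real \<Rightarrow> bool" where
  "markov_tower M tr e d \<longleftrightarrow>
     d > 0 \<and>
     (\<forall>n. fd_star_subalg (M n)) \<and>
     (\<forall>n. M n \<subseteq> M (Suc n)) \<and>
     (\<forall>n. faithful_tracial_state (M n) (tr n)) \<and>
     (\<forall>n. \<forall>x\<in>M n. tr (Suc n) x = tr n x) \<and>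
     (\<forall>n\<ge>1. e n \<in> M (Suc n) \<and> e n * e n = e n \<and> astar (e n) = e n) \<and>
     (\<forall>i\<ge>1. \<forall>j\<ge>1. (i > j + 1 \<or> j > i + 1) \<longrightarrow> e i * e j = e j * e i) \<and>
     (\<forall>i\<ge>1. e i * e (Suc i) * e i = cscale (complex_of_real (1 / d\<^sup>2)) (e i) \<and>
             e (Suc i) * e i * e (Suc i) = cscale (complex_of_real (1 / d\<^sup>2)) (e (Suc i))) \<and>
     (\<forall>n\<ge>1. \<forall>x\<in>M n. e n * x * e n = condexp M tr n x * e n) \<and>
     (\<forall>n\<ge>1. condexp M tr (Suc n) (e n) = cscale (complex_of_real (1 / d\<^sup>2)) 1) \<and>
     (\<forall>n\<ge>1. {x * e n | x. x \<in> M (Suc n)} = {x * e n | x. x \<in> M n})"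

text \<open>X_0 = X_1 = (0); X_(n+1) = linear span of M_n e_n M_n for n \<ge> 1
  (scalars are absorbed into the left factors).\<close>
definition Xideal ::
  "(nat \<Rightarrow> 'a::complex_star_algebra set) \<Rightarrow> (nat \<Rightarrow> 'a) \<Rightarrow> nat \<Rightarrow> 'a set" where
  "Xideal M e k =
     (if k \<le> 1 then {0}
      else {(\<Sum>i<m. a i * e (k - 1) * b i) | (m::nat) a b.
              \<forall>i<m. a i \<in> M (k - 1) \<and> b i \<in> M (k - 1)})"

text \<open>Y_k: the complementary summand of X_k in M_k, i.e. its two-sided annihilator
  (so Y_0 = M_0, Y_1 = M_1).\<close>
definition Ycompl ::
  "(nat \<Rightarrow> 'a::complex_star_algebra set) \<Rightarrow> (nat \<Rightarrow> 'a) \<Rightarrow> nat \<Rightarrow> 'a set" where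
  "Ycompl M e k = {y \<in> M k. \<forall>x\<in>Xideal M e k. x * y = 0 \<and> y * x = 0}"

text \<open>Operators on L^2(M_n,tr_n) = M_n are represented as functions vanishing off M_n.\<close>
definition lmult :: "(nat \<Rightarrow> 'a::complex_star_algebra set) \<Rightarrow> nat \<Rightarrow> 'a \<Rightarrow> 'a \<Rightarrow> 'a" where
  "lmult M n a = (\<lambda>\<xi>. if \<xi> \<in> M n then a * \<xi> else 0)"

text \<open>Jones projection p_n: orthogonal projection of L^2(M_n) onto L^2(M_(n-1)).\<close>
definition jones_proj ::
  "(nat \<Rightarrow> 'a::complex_star_algebra set) \<Rightarrow> (nat \<Rightarrow> 'a \<Rightarrow> complex) \<Rightarrow> nat \<Rightarrow> 'a \<Rightarrow> 'a" where
  "jones_proj M tr n = (\<lambda>\<xi>. if \<xi> \<in> M n then condexp M tr n \<xi> else 0)"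

definition l2_inner :: "(nat \<Rightarrow> 'a::complex_star_algebra \<Rightarrow> complex) \<Rightarrow> nat \<Rightarrow> 'a \<Rightarrow> 'a \<Rightarrow> complex" where
  "l2_inner tr n \<xi> \<eta> = tr n (astar \<eta> * \<xi>)"

definition basic_op ::
  "(nat \<Rightarrow> 'a::complex_star_algebra set) \<Rightarrow> (nat \<Rightarrow> 'a \<Rightarrow> complex) \<Rightarrow> nat
    \<Rightarrow> nat \<Rightarrow> (nat \<Rightarrow> 'a) \<Rightarrow> (nat \<Rightarrow> 'a) \<Rightarrow> 'a \<Rightarrow> 'a" where
  "basic_op M tr n m a b =
     (\<lambda>\<xi>. \<Sum>i<m. (lmult M n (a i) \<circ> jones_proj M tr n \<circ> lmult M n (b i)) \<xi>)"

definition basic_constr ::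
  "(nat \<Rightarrow> 'a::complex_star_algebra set) \<Rightarrow> (nat \<Rightarrow> 'a \<Rightarrow> complex) \<Rightarrow> nat \<Rightarrow> ('a \<Rightarrow> 'a) set" where
  "basic_constr M tr n =
     {basic_op M tr n m a b | m a b. \<forall>i<m. a i \<in> M n \<and> b i \<in> M n}"

definition basic_trace ::
  "(nat \<Rightarrow> 'a::complex_star_algebra set) \<Rightarrow> (nat \<Rightarrow> 'a \<Rightarrow> complex) \<Rightarrow> nat \<Rightarrow> ('a \<Rightarrow> 'a) \<Rightarrow> complex" where
  "basic_trace M tr n T =
     (THE c. \<exists>(m::nat) a b. (\<forall>i<m. a i \<in> M n \<and> b i \<in> M n) \<and>
                     T = basic_op M tr n m a b \<and> c = (\<Sum>i<m. tr n (a i * b i)))"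

end

theory Submission
  imports Defs
begin


context complex_star_algebra begin

lemma cscale_zero_left[simp]: "cscale 0 x = 0"
proof -
  have "cscale 0 x + cscale 0 x = cscale 0 x + 0" using cscale_add_left[of 0 0 x] by simp
  then show ?thesis by simp
qed

lemma cscale_zero_right[simp]: "cscale c 0 = 0"
proof -
  have "cscale c 0 + cscale c 0 = cscale c 0 + 0" using cscale_add_right[of c 0 0] by simp
  then show ?thesis by simp
qed

lemma cscale_one_simp[simp]: "cscale 1 x = x" by (rule cscale_one)

lemma cscale_minus_one: "cscale (-1) x = - x"
proof -
  have "cscale (-1) x + x = 0" using cscale_add_left[of "-1" 1 x] by (simp add: cscale_one)
  then show ?thesis by (simp add: eq_neg_iff_add_eq_0)
qed

lemma cscale_minus_right: "cscale c (- x) = - cscale c x"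
proof -
  have "cscale c (-x) + cscale c x = 0" using cscale_add_right[of c "-x" x] by simp
  then show ?thesis by (simp add: eq_neg_iff_add_eq_0)
qed

lemma cscale_diff_right: "cscale c (x - y) = cscale c x - cscale c y"
  using cscale_add_right[of c x "-y"] by (simp add: cscale_minus_right)

lemma cscale_minus_left: "cscale (- c) x = - cscale c x"
proof -
  have "cscale (-c) x + cscale c x = 0" using cscale_add_left[of "-c" c x] by simp
  then show ?thesis by (simp add: eq_neg_iff_add_eq_0)
qed

lemma cscale_diff_left: "cscale (b - c) x = cscale b x - cscale c x"
  using cscale_add_left[of b "-c" x] by (simp add: cscale_minus_left)

lemma cscale_sum: "cscale c (sum f S) = (\<Sum>i\<in>S. cscale c (f i))"
  by (induction S rule: infinite_finite_induct) (auto simp: cscale_add_right)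

lemma astar_zero[simp]: "astar 0 = 0"
proof -
  have "astar 0 + astar 0 = astar 0 + 0" using astar_add[of 0 0] by simp
  then show ?thesis by simp
qed

lemma astar_one[simp]: "astar 1 = 1"
proof -
  have "astar 1 = astar 1 * astar (astar 1)" by (simp add: astar_astar)
  also have "\<dots> = astar (astar 1 * 1)" by (rule astar_mult[symmetric])
  also have "\<dots> = 1" by (simp add: astar_astar)
  finally show ?thesis .
qed

lemma astar_minus: "astar (- x) = - astar x"
proof -
  have "astar (-x) + astar x = 0" using astar_add[of "-x" x] by simp
  then show ?thesis by (simp add: eq_neg_iff_add_eq_0)
qed

lemma astar_diff: "astar (x - y) = astar x - astar y"
  using astar_add[of x "-y"] by (simp add: astar_minus)

lemma astar_sum: "astar (sum f S) = (\<Sum>i\<in>S. astar (f i))"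
  by (induction S rule: infinite_finite_induct) (auto simp: astar_add)

lemma cscale_cscale_comm: "cscale b (cscale c x) = cscale c (cscale b x)"
  by (simp add: cscale_cscale mult.commute)

end

lemma clin_span_zero: "0 \<in> clin_span S"
  unfolding clin_span_def by (rule CollectI, rule exI[of _ 0], auto)

lemma clin_span_snoc:
  assumes "w \<in> clin_span S" "s \<in> S"
  shows "w + cscale a s \<in> clin_span S"
proof -
  obtain k :: nat and c v where w: "w = (\<Sum>i<k. cscale (c i) (v i))" and v: "\<forall>i<k. v i \<in> S"
    using assms(1) unfolding clin_span_def by blast
  have "(\<Sum>i<Suc k. cscale ((c(k:=a)) i) ((v(k:=s)) i)) = w + cscale a s"
    by (simp add: w)
  moreover have "\<forall>i<Suc k. (v(k:=s)) i \<in> S" using v assms(2) by (auto simp: less_Suc_eq)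
  ultimately show ?thesis unfolding clin_span_def
    by (intro CollectI exI[of _ "Suc k"] exI[of _ "c(k:=a)"] exI[of _ "v(k:=s)"]) simp
qed

lemma clin_span_induct[consumes 1, case_names zero snoc]:
  assumes "x \<in> clin_span S" "P 0"
    "\<And>w c s. w \<in> clin_span S \<Longrightarrow> P w \<Longrightarrow> s \<in> S \<Longrightarrow> P (w + cscale c s)"
  shows "P x"
proof -
  obtain k :: nat and c v where w: "x = (\<Sum>i<k. cscale (c i) (v i))" and v: "\<forall>i<k. v i \<in> S"
    using assms(1) unfolding clin_span_def by blast
  have "(\<Sum>i<k. cscale (c i) (v i)) \<in> clin_span S \<and> P (\<Sum>i<k. cscale (c i) (v i))"
    using v
  proof (induction k)
    case 0 then show ?case using assms(2) clin_span_zero by simp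
  next
    case (Suc k)
    then have ih: "(\<Sum>i<k. cscale (c i) (v i)) \<in> clin_span S \<and> P (\<Sum>i<k. cscale (c i) (v i))"
      by simp
    have vk: "v k \<in> S" using Suc.prems by simp
    show ?case using ih vk assms(3)[of "\<Sum>i<k. cscale (c i) (v i)" "v k" "c k"]
        clin_span_snoc[of "\<Sum>i<k. cscale (c i) (v i)" S "v k" "c k"] by simp
  qed
  then show ?thesis using w by simp
qed

lemma clin_span_base: "s \<in> S \<Longrightarrow> s \<in> clin_span S"
  using clin_span_snoc[OF clin_span_zero, of s S 1] by simp

lemma clin_span_add: assumes "u \<in> clin_span S" "v \<in> clin_span S" shows "u + v \<in> clin_span S"
  using assms(2)
proof (induction v rule: clin_span_induct)
  case zero then show ?case using assms(1) by simp
next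
  case (snoc w c s)
  then show ?case using clin_span_snoc[of "u + w" S s c] by (simp add: add.assoc)
qed

lemma clin_span_scale: "v \<in> clin_span S \<Longrightarrow> cscale a v \<in> clin_span S"
proof (induction v rule: clin_span_induct)
  case zero then show ?case by (simp add: clin_span_zero)
next
  case (snoc w c s)
  then show ?case using clin_span_snoc[of "cscale a w" S s "a * c"]
    by (simp add: cscale_add_right cscale_cscale)
qed

lemma clin_span_mono: "v \<in> clin_span S \<Longrightarrow> S \<subseteq> T \<Longrightarrow> v \<in> clin_span T"
proof (induction v rule: clin_span_induct)
  case zero then show ?case by (simp add: clin_span_zero)
next
  case (snoc w c s)
  then show ?case using clin_span_snoc[of w T s c] by auto
qed

lemma clin_span_sub:
  assumes "v \<in> clin_span S" "S \<subseteq> A" "0 \<in> A"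
    "\<forall>x\<in>A. \<forall>y\<in>A. x + y \<in> A" "\<forall>c. \<forall>x\<in>A. cscale c x \<in> A"
  shows "v \<in> A"
  using assms by (induction v rule: clin_span_induct) auto



locale ftr =
  fixes A :: "'a::complex_star_algebra set" and t :: "'a \<Rightarrow> complex"
  assumes sub: "fd_star_subalg A" and fts: "faithful_tracial_state A t"
begin

lemma A_one[simp]: "1 \<in> A" using sub unfolding fd_star_subalg_def by blast
lemma A_add[simp]: "x \<in> A \<Longrightarrow> y \<in> A \<Longrightarrow> x + y \<in> A" using sub unfolding fd_star_subalg_def by blast
lemma A_mult[simp]: "x \<in> A \<Longrightarrow> y \<in> A \<Longrightarrow> x * y \<in> A" using sub unfolding fd_star_subalg_def by blast
lemma A_scale[simp]: "x \<in> A \<Longrightarrow> cscale c x \<in> A" using sub unfolding fd_star_subalg_def by blast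
lemma A_astar[simp]: "x \<in> A \<Longrightarrow> astar x \<in> A" using sub unfolding fd_star_subalg_def by blast
lemma A_zero[simp]: "0 \<in> A" using A_scale[OF A_one, of 0] by simp
lemma A_minus[simp]: "x \<in> A \<Longrightarrow> - x \<in> A" using A_scale[of x "-1"] by (simp add: cscale_minus_one)
lemma A_diff[simp]: "x \<in> A \<Longrightarrow> y \<in> A \<Longrightarrow> x - y \<in> A"
  using A_add[of x "-y"] by simp
lemma A_sum: "(\<And>i. i \<in> I \<Longrightarrow> f i \<in> A) \<Longrightarrow> sum f I \<in> A"
  by (induction I rule: infinite_finite_induct) auto
lemma A_span: "fd_star_subalg A \<Longrightarrow> \<exists>B. finite B \<and> B \<subseteq> A \<and> A = clin_span B"
  unfolding fd_star_subalg_def by blast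

lemma t_add: "x \<in> A \<Longrightarrow> y \<in> A \<Longrightarrow> t (x + y) = t x + t y" using fts unfolding faithful_tracial_state_def by blast
lemma t_scale: "x \<in> A \<Longrightarrow> t (cscale c x) = c * t x" using fts unfolding faithful_tracial_state_def by blast
lemma t_one: "t 1 = 1" using fts unfolding faithful_tracial_state_def by blast
lemma t_comm: "x \<in> A \<Longrightarrow> y \<in> A \<Longrightarrow> t (x * y) = t (y * x)" using fts unfolding faithful_tracial_state_def by blast
lemma t_pos: "x \<in> A \<Longrightarrow> t (astar x * x) \<in> \<real>" using fts unfolding faithful_tracial_state_def by blast
lemma t_faithful: "x \<in> A \<Longrightarrow> t (astar x * x) = 0 \<Longrightarrow> x = 0"
  using fts unfolding faithful_tracial_state_def by fastforce
lemma t_zero[simp]: "t 0 = 0" using t_scale[OF A_one, of 0] by simp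
lemma t_minus: "x \<in> A \<Longrightarrow> t (- x) = - t x" using t_scale[of x "-1"] by (simp add: cscale_minus_one)
lemma t_diff: "x \<in> A \<Longrightarrow> y \<in> A \<Longrightarrow> t (x - y) = t x - t y"
  using t_add[of x "-y"] by (simp add: t_minus)
lemma t_sum: "(\<And>i. i \<in> I \<Longrightarrow> f i \<in> A) \<Longrightarrow> t (sum f I) = (\<Sum>i\<in>I. t (f i))"
proof (induction I rule: infinite_finite_induct)
  case (insert x F) then show ?case by (simp add: t_add A_sum)
qed auto

lemma t_astar:
  assumes x: "x \<in> A" shows "t (astar x) = cnj (t x)"
proof -
  have xs: "astar x \<in> A" using x by simp
  have e1: "astar (1 + x) * (1 + x) = 1 + x + astar x + astar x * x"
    by (simp add: astar_add algebra_simps)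
  have "t (astar (1 + x) * (1 + x)) = 1 + t x + t (astar x) + t (astar x * x)"
    unfolding e1 using x xs by (simp add: t_add t_one)
  moreover have "t (astar (1 + x) * (1 + x)) \<in> \<real>" using t_pos[of "1 + x"] x by simp
  moreover have "t (astar x * x) \<in> \<real>" using t_pos x by simp
  ultimately have im1: "Im (t x) + Im (t (astar x)) = 0"
    by (simp add: complex_is_Real_iff)
  let ?y = "cscale \<i> x"
  have e2: "astar (1 + ?y) * (1 + ?y) = 1 + ?y + cscale (-\<i>) (astar x) + astar x * x"
  proof -
    have "astar (1 + ?y) = 1 + cscale (-\<i>) (astar x)" by (simp add: astar_add astar_cscale)
    moreover have "cscale (-\<i>) (astar x) * ?y = astar x * x"
      by (simp add: mult_cscale_left mult_cscale_right cscale_cscale)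
    ultimately show ?thesis by (simp add: algebra_simps)
  qed
  have "t (astar (1 + ?y) * (1 + ?y)) = 1 + \<i> * t x + (-\<i>) * t (astar x) + t (astar x * x)"
    unfolding e2 using x xs by (simp add: t_add t_one t_scale)
  moreover have "t (astar (1 + ?y) * (1 + ?y)) \<in> \<real>" using t_pos[of "1 + ?y"] x by simp
  moreover have "t (astar x * x) \<in> \<real>" using t_pos x by simp
  ultimately have re1: "Re (t x) - Re (t (astar x)) = 0"
    by (simp add: complex_is_Real_iff)
  show ?thesis using im1 re1 by (intro complex_eqI) auto
qed

lemma orth_span:
  assumes S: "S \<subseteq> A" and w: "w \<in> A" and o: "\<forall>s\<in>S. t (astar s * w) = 0"
    and v: "v \<in> clin_span S"
  shows "t (astar v * w) = 0"
proof -
  have "v \<in> A \<and> t (astar v * w) = 0" using v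
  proof (induction v rule: clin_span_induct)
    case zero then show ?case by simp
  next
    case (snoc u c s)
    have sA: "s \<in> A" using snoc S by auto
    have "astar (u + cscale c s) * w = astar u * w + cscale (cnj c) (astar s * w)"
      by (simp add: astar_add astar_cscale distrib_right mult_cscale_left)
    then show ?case using snoc sA w o by (simp add: t_add t_scale)
  qed
  then show ?thesis by simp
qed

lemma span_sub: "S \<subseteq> A \<Longrightarrow> clin_span S \<subseteq> A"
  using clin_span_sub[of _ S A] by auto

lemma proj:
  assumes "finite S" "S \<subseteq> A" "x \<in> A"
  shows "\<exists>p\<in>clin_span S. \<forall>s\<in>S. t (astar s * (x - p)) = 0"
  using assms
proof (induction S arbitrary: x rule: finite_induct)
  case empty
  then show ?case using clin_span_zero by blast
next
  case (insert s S)
  have SA: "S \<subseteq> A" and sA: "s \<in> A" using insert by auto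
  obtain p' where p': "p' \<in> clin_span S" "\<forall>s'\<in>S. t (astar s' * (x - p')) = 0"
    using insert SA by blast
  obtain q where q: "q \<in> clin_span S" "\<forall>s'\<in>S. t (astar s' * (s - q)) = 0"
    using insert.IH[OF SA sA] by blast
  have p'A: "p' \<in> A" and qA: "q \<in> A" using p'(1) q(1) span_sub[OF SA] by auto
  define r where "r = s - q"
  have rA: "r \<in> A" unfolding r_def using sA qA by simp
  define c where "c = t (astar r * (x - p')) / t (astar r * r)"
  define p where "p = p' + cscale c r"
  have pA: "p \<in> A" unfolding p_def using p'A rA by simp
  have xA: "x \<in> A" by fact
  have sub1: "clin_span S \<subseteq> clin_span (insert s S)" using clin_span_mono by blast
  have "r \<in> clin_span (insert s S)"
  proof -
    have "s + cscale (-1) q \<in> clin_span (insert s S)"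
      using clin_span_add[OF clin_span_base[of s "insert s S"] clin_span_scale[of q _ "-1"]]
        q(1) sub1 by auto
    then show ?thesis unfolding r_def by (simp add: cscale_minus_one)
  qed
  then have pspan: "p \<in> clin_span (insert s S)" unfolding p_def
    using clin_span_add clin_span_scale p'(1) sub1 by blast
  have xp: "x - p = (x - p') - cscale c r" unfolding p_def by (simp add: algebra_simps)
  have oS: "\<forall>s'\<in>S. t (astar s' * (x - p)) = 0"
  proof
    fix s' assume s': "s' \<in> S"
    then have s'A: "s' \<in> A" using SA by auto
    have "astar s' * (x - p) = astar s' * (x - p') - cscale c (astar s' * r)"
      unfolding xp by (simp add: right_diff_distrib mult_cscale_right)
    then have "t (astar s' * (x - p)) = t (astar s' * (x - p')) - c * t (astar s' * r)"
      using s'A xA p'A rA by (simp add: t_diff t_scale)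
    then show "t (astar s' * (x - p)) = 0" using p'(2) q(2) s' unfolding r_def by simp
  qed
  have oq: "t (astar q * (x - p)) = 0" using orth_span[OF SA _ oS q(1)] xA pA by simp
  have orr: "t (astar r * (x - p)) = 0"
  proof (cases "t (astar r * r) = 0")
    case True
    then have "r = 0" using t_faithful rA by blast
    then show ?thesis by simp
  next
    case False
    have "astar r * (x - p) = astar r * (x - p') - cscale c (astar r * r)"
      unfolding xp by (simp add: right_diff_distrib mult_cscale_right)
    then have "t (astar r * (x - p)) = t (astar r * (x - p')) - c * t (astar r * r)"
      using xA p'A rA by (simp add: t_diff t_scale)
    then show ?thesis using False unfolding c_def by simp
  qed
  have "astar s * (x - p) = astar r * (x - p) + astar q * (x - p)"
    unfolding r_def by (simp add: astar_diff algebra_simps)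
  then have "t (astar s * (x - p)) = 0" using orr oq rA qA xA pA by (simp add: t_add)
  then show ?case using oS pspan by blast
qed

end



locale mt =
  fixes M :: "nat \<Rightarrow> 'a::complex_star_algebra set" and tr :: "nat \<Rightarrow> 'a \<Rightarrow> complex"
    and e :: "nat \<Rightarrow> 'a" and d :: real
  assumes tower: "markov_tower M tr e d"
begin

abbreviation "E \<equiv> condexp M tr"
abbreviation "\<delta> \<equiv> complex_of_real (1 / d\<^sup>2)"
abbreviation "D \<equiv> complex_of_real (d\<^sup>2)"

lemmas T = tower[unfolded markov_tower_def]
lemmas T1 = T[THEN conjunct1]
lemmas T2 = T[THEN conjunct2, THEN conjunct1]
lemmas T3 = T[THEN conjunct2, THEN conjunct2, THEN conjunct1]
lemmas T4 = T[THEN conjunct2, THEN conjunct2, THEN conjunct2, THEN conjunct1]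
lemmas T5 = T[THEN conjunct2, THEN conjunct2, THEN conjunct2, THEN conjunct2, THEN conjunct1]
lemmas T6 = T[THEN conjunct2, THEN conjunct2, THEN conjunct2, THEN conjunct2, THEN conjunct2, THEN conjunct1]
lemmas T7 = T[THEN conjunct2, THEN conjunct2, THEN conjunct2, THEN conjunct2, THEN conjunct2, THEN conjunct2, THEN conjunct1]
lemmas T8 = T[THEN conjunct2, THEN conjunct2, THEN conjunct2, THEN conjunct2, THEN conjunct2, THEN conjunct2, THEN conjunct2, THEN conjunct1]
lemmas T9 = T[THEN conjunct2, THEN conjunct2, THEN conjunct2, THEN conjunct2, THEN conjunct2, THEN conjunct2, THEN conjunct2, THEN conjunct2, THEN conjunct1]
lemmas T10 = T[THEN conjunct2, THEN conjunct2, THEN conjunct2, THEN conjunct2, THEN conjunct2, THEN conjunct2, THEN conjunct2, THEN conjunct2, THEN conjunct2, THEN conjunct1]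
lemmas T11 = T[THEN conjunct2, THEN conjunct2, THEN conjunct2, THEN conjunct2, THEN conjunct2, THEN conjunct2, THEN conjunct2, THEN conjunct2, THEN conjunct2, THEN conjunct2]

lemma d_pos: "d > 0" using T1 .
lemma Dd: "D * \<delta> = 1"
proof -
  have "d\<^sup>2 * (1 / d\<^sup>2) = 1" using d_pos by simp
  then show ?thesis by (metis of_real_1 of_real_mult)
qed
lemma dD: "\<delta> * D = 1" using Dd by (simp add: mult.commute)
lemma cscale_Dd[simp]: "cscale D (cscale \<delta> x) = x" by (subst cscale_cscale, subst Dd, rule cscale_one)
lemma cscale_dD[simp]: "cscale \<delta> (cscale D x) = x" by (subst cscale_cscale, subst dD, rule cscale_one)

lemma ftrM: "ftr (M n) (tr n)"
  unfolding ftr_def using T2 T4 by blast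
lemma M_Suc: "M n \<subseteq> M (Suc n)" using T3 by blast
lemma M_le: "m \<le> n \<Longrightarrow> M m \<subseteq> M n"
  by (induction n rule: dec_induct) (use M_Suc in auto)
lemma M_pred: "M (k - 1) \<subseteq> M k" using M_le by simp
lemma tr_Suc: "x \<in> M n \<Longrightarrow> tr (Suc n) x = tr n x" using T5 by blast
lemma e_in: "n \<ge> 1 \<Longrightarrow> e n \<in> M (Suc n)" using T6 by blast
lemma e_idem: "n \<ge> 1 \<Longrightarrow> e n * e n = e n" using T6 by blast
lemma e_sa: "n \<ge> 1 \<Longrightarrow> astar (e n) = e n" using T6 by blast
lemma e_rel: "i \<ge> 1 \<Longrightarrow> e i * e (Suc i) * e i = cscale \<delta> (e i)"
  using T8 by blast
lemma M2: "n \<ge> 1 \<Longrightarrow> x \<in> M n \<Longrightarrow> e n * x * e n = E n x * e n"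
  using T9 by blast
lemma M3: "n \<ge> 1 \<Longrightarrow> E (Suc n) (e n) = cscale \<delta> 1"
  using T10 by blast
lemma M4: assumes "n \<ge> 1" "x \<in> M (Suc n)" shows "\<exists>y\<in>M n. x * e n = y * e n"
proof -
  have "{x * e n | x. x \<in> M (Suc n)} = {x * e n | x. x \<in> M n}"
    using T11 assms(1) by blast
  then have "x * e n \<in> {x * e n | x. x \<in> M n}" using assms(2) by blast
  then show ?thesis by blast
qed

lemmas Mone = ftr.A_one[OF ftrM]
lemmas Madd = ftr.A_add[OF ftrM]
lemmas Mmult = ftr.A_mult[OF ftrM]
lemmas Mscale = ftr.A_scale[OF ftrM]
lemmas Mastar = ftr.A_astar[OF ftrM]
lemmas Mzero = ftr.A_zero[OF ftrM]
lemmas Mminus = ftr.A_minus[OF ftrM]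
lemmas Mdiff = ftr.A_diff[OF ftrM]
lemmas Msimps[simp] = Mone Madd Mmult Mscale Mastar Mzero Mminus Mdiff
lemmas tadd = ftr.t_add[OF ftrM]
lemmas tscale = ftr.t_scale[OF ftrM]
lemmas tone = ftr.t_one[OF ftrM]
lemmas tcomm = ftr.t_comm[OF ftrM]
lemmas tfaith = ftr.t_faithful[OF ftrM]
lemmas tzero = ftr.t_zero[OF ftrM]
lemmas tdiff = ftr.t_diff[OF ftrM]
lemmas tastar = ftr.t_astar[OF ftrM]

lemma Mspan: "\<exists>B. finite B \<and> B \<subseteq> M n \<and> M n = clin_span B"
  using ftr.A_span[OF ftrM] ftr.sub[OF ftrM] by blast

lemma tr_le: "m \<le> n \<Longrightarrow> x \<in> M m \<Longrightarrow> tr n x = tr m x"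
proof (induction n rule: dec_induct)
  case (step n)
  then show ?case using tr_Suc[of x n] M_le[of m n] by auto
qed simp

lemma CE_ex_unique:
  assumes x: "x \<in> M k"
  shows "\<exists>!y. y \<in> M (k - 1) \<and> (\<forall>b\<in>M (k - 1). tr k (b * y) = tr k (b * x))"
proof -
  obtain B where B: "finite B" "B \<subseteq> M (k - 1)" "M (k - 1) = clin_span B" using Mspan by blast
  have BA: "B \<subseteq> M k" using B(2) M_pred by blast
  obtain p where p: "p \<in> clin_span B" "\<forall>s\<in>B. tr k (astar s * (x - p)) = 0"
    using ftr.proj[OF ftrM B(1) BA x] by blast
  have pM: "p \<in> M (k - 1)" using p(1) B(3) by blast
  have pA: "p \<in> M k" using pM M_pred by blast
  have ex: "\<forall>b\<in>M (k - 1). tr k (b * p) = tr k (b * x)"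
  proof
    fix b assume b: "b \<in> M (k - 1)"
    then have bA: "b \<in> M k" using M_pred by blast
    have "astar b \<in> M (k - 1)" using b by (rule Mastar)
    then have "astar b \<in> clin_span B" using B(3) by blast
    moreover have "x - p \<in> M k" using x pA by (rule Mdiff)
    ultimately have "tr k (astar (astar b) * (x - p)) = 0"
      using ftr.orth_span[OF ftrM BA _ p(2)] by blast
    then have "tr k (b * x - b * p) = 0" by (simp only: astar_astar right_diff_distrib)
    moreover have "tr k (b * x - b * p) = tr k (b * x) - tr k (b * p)"
      using bA x pA by (intro tdiff Mmult)
    ultimately show "tr k (b * p) = tr k (b * x)" by simp
  qed
  have uq: "y1 = y2" if y1: "y1 \<in> M (k - 1)" "\<forall>b\<in>M (k - 1). tr k (b * y1) = tr k (b * x)"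
    and y2: "y2 \<in> M (k - 1)" "\<forall>b\<in>M (k - 1). tr k (b * y2) = tr k (b * x)" for y1 y2
  proof -
    have y1A: "y1 \<in> M k" and y2A: "y2 \<in> M k" using y1 y2 M_pred by blast+
    define u where "u = y1 - y2"
    have uA: "u \<in> M k" unfolding u_def using y1A y2A by (rule Mdiff)
    have uM: "astar u \<in> M (k - 1)" unfolding u_def using y1(1) y2(1) by (intro Mastar Mdiff)
    have usA: "astar u \<in> M k" using uA by (rule Mastar)
    have "tr k (astar u * u) = tr k (astar u * y1 - astar u * y2)"
      unfolding u_def by (simp only: right_diff_distrib)
    also have "\<dots> = tr k (astar u * y1) - tr k (astar u * y2)"
      using usA y1A y2A by (intro tdiff Mmult)
    also have "\<dots> = 0" using y1(2) y2(2) uM by simp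
    finally have "u = 0" using tfaith[OF uA] by blast
    then show ?thesis unfolding u_def by simp
  qed
  show ?thesis using pM ex uq by blast
qed

lemma CE: assumes "x \<in> M k"
  shows "E k x \<in> M (k - 1) \<and> (\<forall>b\<in>M (k - 1). tr k (b * E k x) = tr k (b * x))"
  unfolding condexp_def using theI'[OF CE_ex_unique[OF assms]] .

lemma CE_in: "x \<in> M k \<Longrightarrow> E k x \<in> M (k - 1)" using CE by blast
lemma CE_inA: "x \<in> M k \<Longrightarrow> E k x \<in> M k" using CE_in M_pred by blast
lemma CE_prop: "x \<in> M k \<Longrightarrow> b \<in> M (k - 1) \<Longrightarrow> tr k (b * E k x) = tr k (b * x)" using CE by blast

lemma CE_eq:
  assumes "x \<in> M k" "y \<in> M (k - 1)" "\<forall>b\<in>M (k - 1). tr k (b * y) = tr k (b * x)"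
  shows "E k x = y"
  using CE_ex_unique[OF assms(1)] CE[OF assms(1)] assms(2,3) by blast

lemma CE_id: "y \<in> M (k - 1) \<Longrightarrow> E k y = y"
  using CE_eq[of y k y] M_pred by blast

lemma CE_left: assumes a: "a \<in> M (k - 1)" and x: "x \<in> M k" shows "E k (a * x) = a * E k x"
proof (rule CE_eq)
  have aA: "a \<in> M k" using a M_pred by blast
  show "a * x \<in> M k" using aA x by simp
  show "a * E k x \<in> M (k - 1)" using a CE_in[OF x] by simp
  show "\<forall>b\<in>M (k - 1). tr k (b * (a * E k x)) = tr k (b * (a * x))"
    using CE_prop[OF x] a by (simp add: mult.assoc[symmetric])
qed

lemma CE_right: assumes a: "a \<in> M (k - 1)" and x: "x \<in> M k" shows "E k (x * a) = E k x * a"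
proof (rule CE_eq)
  have aA: "a \<in> M k" using a M_pred by blast
  show "x * a \<in> M k" using aA x by simp
  show "E k x * a \<in> M (k - 1)" using a CE_in[OF x] by simp
  show "\<forall>b\<in>M (k - 1). tr k (b * (E k x * a)) = tr k (b * (x * a))"
  proof
    fix b assume b: "b \<in> M (k - 1)"
    then have bA: "b \<in> M k" using M_pred by blast
    have ab: "a * b \<in> M (k - 1)" using a b by simp
    have exA: "E k x \<in> M k" using CE_inA[OF x] .
    have "tr k (b * (E k x * a)) = tr k ((b * E k x) * a)" by (simp only: mult.assoc)
    also have "\<dots> = tr k (a * (b * E k x))" using tcomm[of "b * E k x" k a] bA aA exA by simp
    also have "\<dots> = tr k ((a * b) * E k x)" by (simp only: mult.assoc)
    also have "\<dots> = tr k ((a * b) * x)" using CE_prop[OF x ab] .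
    also have "\<dots> = tr k ((b * x) * a)" using tcomm[of a k "b * x"] bA aA x by (simp add: mult.assoc)
    also have "\<dots> = tr k (b * (x * a))" by (simp only: mult.assoc)
    finally show "tr k (b * (E k x * a)) = tr k (b * (x * a))" .
  qed
qed

lemma CE_add: assumes x: "x \<in> M k" and y: "y \<in> M k" shows "E k (x + y) = E k x + E k y"
proof (rule CE_eq)
  show "x + y \<in> M k" using x y by simp
  show "E k x + E k y \<in> M (k - 1)" using CE_in x y by simp
  show "\<forall>b\<in>M (k - 1). tr k (b * (E k x + E k y)) = tr k (b * (x + y))"
  proof
    fix b assume b: "b \<in> M (k - 1)"
    then have bA: "b \<in> M k" using M_pred by blast
    show "tr k (b * (E k x + E k y)) = tr k (b * (x + y))"
      using CE_prop[OF x b] CE_prop[OF y b] bA x y CE_inA[OF x] CE_inA[OF y]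
      by (simp add: distrib_left tadd)
  qed
qed

lemma CE_scale: assumes x: "x \<in> M k" shows "E k (cscale c x) = cscale c (E k x)"
proof (rule CE_eq)
  show "cscale c x \<in> M k" using x by simp
  show "cscale c (E k x) \<in> M (k - 1)" using CE_in x by simp
  show "\<forall>b\<in>M (k - 1). tr k (b * cscale c (E k x)) = tr k (b * cscale c x)"
  proof
    fix b assume b: "b \<in> M (k - 1)"
    then have bA: "b \<in> M k" using M_pred by blast
    show "tr k (b * cscale c (E k x)) = tr k (b * cscale c x)"
      using CE_prop[OF x b] bA x CE_inA[OF x]
      by (simp add: mult_cscale_right tscale)
  qed
qed

lemma CE_zero[simp]: "E k 0 = 0" using CE_id[of 0 k] by simp

lemma CE_tr: assumes x: "x \<in> M k" shows "tr k (E k x) = tr k x"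
  using CE_prop[OF x, of 1] by simp

end



context mt begin

lemma cscale_Dd'[simp]: "cscale ((complex_of_real d)^2) (cscale (1 / (complex_of_real d)^2) x) = x"
  using cscale_Dd[of x] by simp
lemma cscale_dD'[simp]: "cscale (1 / (complex_of_real d)^2) (cscale ((complex_of_real d)^2) x) = x"
  using cscale_dD[of x] by simp

lemma MsubS: "x \<in> M n \<Longrightarrow> x \<in> M (Suc n)" using M_Suc by blast

lemma E_ye: assumes n: "n \<ge> 1" and y: "y \<in> M n" shows "E (Suc n) (y * e n) = cscale \<delta> y"
proof -
  have "E (Suc n) (y * e n) = y * E (Suc n) (e n)"
    using CE_left[of y "Suc n" "e n"] y e_in[OF n] by simp
  also have "\<dots> = cscale \<delta> y" using M3[OF n] by (simp add: mult_cscale_right)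
  finally show ?thesis .
qed

lemma key: assumes n: "n \<ge> 1" and x: "x \<in> M (Suc n)"
  shows "cscale D (E (Suc n) (x * e n)) \<in> M n \<and> x * e n = cscale D (E (Suc n) (x * e n)) * e n"
proof -
  obtain y where y: "y \<in> M n" "x * e n = y * e n" using M4[OF n x] by blast
  have "cscale D (E (Suc n) (x * e n)) = y" using y E_ye[OF n y(1)] by simp
  then show ?thesis using y by simp
qed

lemma inj1: assumes n: "n \<ge> 1" shows "inj_on (\<lambda>y. y * e n) (M n)"
proof (rule inj_onI)
  fix y y' assume y: "y \<in> M n" and y': "y' \<in> M n" and eq: "y * e n = y' * e n"
  have "cscale \<delta> y = cscale \<delta> y'" using E_ye[OF n y] E_ye[OF n y'] eq by simp
  then have "cscale D (cscale \<delta> y) = cscale D (cscale \<delta> y')" by simp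
  then show "y = y'" by simp
qed

lemma item3: assumes n: "n \<ge> 1" and x: "x \<in> M n"
  shows "tr (Suc n) (x * e n) = \<delta> * tr n x"
proof -
  have xe: "x * e n \<in> M (Suc n)" using MsubS[OF x] e_in[OF n] by simp
  have "tr (Suc n) (x * e n) = tr (Suc n) (E (Suc n) (x * e n))" using CE_tr[OF xe] by simp
  also have "\<dots> = tr (Suc n) (cscale \<delta> x)" using E_ye[OF n x] by simp
  also have "\<dots> = \<delta> * tr (Suc n) x" using tscale MsubS[OF x] by blast
  also have "\<dots> = \<delta> * tr n x" using tr_Suc[OF x] by simp
  finally show ?thesis .
qed

lemma item4: assumes n: "n \<ge> 1"
  shows "{e n * x * e n | x. x \<in> M (Suc n)} = {y * e n | y. y \<in> M (n - 1)}"
proof (intro set_eqI iffI)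
  fix z assume "z \<in> {e n * x * e n | x. x \<in> M (Suc n)}"
  then obtain x where x: "x \<in> M (Suc n)" "z = e n * x * e n" by blast
  obtain y where y: "y \<in> M n" "x * e n = y * e n" using M4[OF n x(1)] by blast
  have "z = e n * y * e n" using x(2) y(2) by (simp add: mult.assoc)
  also have "\<dots> = E n y * e n" using M2[OF n y(1)] .
  finally show "z \<in> {y * e n | y. y \<in> M (n - 1)}" using CE_in[OF y(1)] by blast
next
  fix z assume "z \<in> {y * e n | y. y \<in> M (n - 1)}"
  then obtain y where y: "y \<in> M (n - 1)" "z = y * e n" by blast
  have yn: "y \<in> M n" using y(1) M_pred by blast
  have "e n * y * e n = E n y * e n" using M2[OF n yn] .
  also have "\<dots> = z" using CE_id[OF y(1)] y(2) by simp
  finally show "z \<in> {e n * x * e n | x. x \<in> M (Suc n)}" using MsubS[OF yn] by (intro CollectI exI[of _ y]) auto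
qed

end


context mt begin

definition XS :: "nat \<Rightarrow> 'a set" where
  "XS n = {(\<Sum>i<m. a i * e n * b i) | (m::nat) a b. \<forall>i<m. a i \<in> M n \<and> b i \<in> M n}"

lemma Xideal_Suc: "n \<ge> 1 \<Longrightarrow> Xideal M e (Suc n) = XS n"
  unfolding Xideal_def XS_def by simp

lemma X_zero[simp]: "0 \<in> XS n"
  unfolding XS_def by (intro CollectI exI[of _ 0]) simp

lemma X_snoc: assumes "x \<in> XS n" "a \<in> M n" "b \<in> M n" shows "x + a * e n * b \<in> XS n"
proof -
  obtain m :: nat and aa bb where x: "x = (\<Sum>i<m. aa i * e n * bb i)"
    and ab: "\<forall>i<m. aa i \<in> M n \<and> bb i \<in> M n"
    using assms(1) unfolding XS_def by blast
  have "(\<Sum>i<Suc m. (aa(m:=a)) i * e n * (bb(m:=b)) i) = x + a * e n * b" by (simp add: x)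
  moreover have "\<forall>i<Suc m. (aa(m:=a)) i \<in> M n \<and> (bb(m:=b)) i \<in> M n"
    using ab assms by (auto simp: less_Suc_eq)
  ultimately show ?thesis unfolding XS_def
    by (intro CollectI exI[of _ "Suc m"] exI[of _ "aa(m:=a)"] exI[of _ "bb(m:=b)"]) simp
qed

lemma X_induct[consumes 1, case_names zero snoc]:
  assumes "x \<in> XS n" "P 0"
    "\<And>w a b. w \<in> XS n \<Longrightarrow> P w \<Longrightarrow> a \<in> M n \<Longrightarrow> b \<in> M n \<Longrightarrow> P (w + a * e n * b)"
  shows "P x"
proof -
  obtain m :: nat and aa bb where x: "x = (\<Sum>i<m. aa i * e n * bb i)"
    and ab: "\<forall>i<m. aa i \<in> M n \<and> bb i \<in> M n"
    using assms(1) unfolding XS_def by blast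
  have "(\<Sum>i<m. aa i * e n * bb i) \<in> XS n \<and> P (\<Sum>i<m. aa i * e n * bb i)"
    using ab
  proof (induction m)
    case 0 then show ?case using assms(2) by simp
  next
    case (Suc k)
    then have ih: "(\<Sum>i<k. aa i * e n * bb i) \<in> XS n \<and> P (\<Sum>i<k. aa i * e n * bb i)" by simp
    have abk: "aa k \<in> M n" "bb k \<in> M n" using Suc.prems by auto
    show ?case using ih abk assms(3)[of "\<Sum>i<k. aa i * e n * bb i" "aa k" "bb k"]
        X_snoc[of "\<Sum>i<k. aa i * e n * bb i" n "aa k" "bb k"] by simp
  qed
  then show ?thesis using x by simp
qed

lemma X_single: "a \<in> M n \<Longrightarrow> b \<in> M n \<Longrightarrow> a * e n * b \<in> XS n"
  using X_snoc[OF X_zero] by fastforce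

lemma X_add: assumes "x \<in> XS n" "y \<in> XS n" shows "x + y \<in> XS n"
  using assms(2)
proof (induction y rule: X_induct)
  case zero then show ?case using assms(1) by simp
next
  case (snoc w a b)
  then show ?case using X_snoc[of "x + w" n a b] by (simp add: add.assoc)
qed

lemma X_scale: assumes "x \<in> XS n" shows "cscale c x \<in> XS n"
  using assms
proof (induction x rule: X_induct)
  case zero then show ?case by simp
next
  case (snoc w a b)
  then show ?case using X_snoc[of "cscale c w" n "cscale c a" b]
    by (simp add: cscale_add_right mult_cscale_left)
qed

lemma X_minus: "x \<in> XS n \<Longrightarrow> - x \<in> XS n" using X_scale[of x n "-1"] by (simp add: cscale_minus_one)
lemma X_diff: "x \<in> XS n \<Longrightarrow> y \<in> XS n \<Longrightarrow> x - y \<in> XS n" using X_add[of x n "-y"] X_minus by simp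

lemma X_sub: assumes n: "n \<ge> 1" and x: "x \<in> XS n" shows "x \<in> M (Suc n)"
  using x
proof (induction x rule: X_induct)
  case zero then show ?case by simp
next
  case (snoc w a b)
  then show ?case using MsubS e_in[OF n] by simp
qed

lemma eM: assumes n: "n \<ge> 1" and w: "w \<in> M (Suc n)" shows "\<exists>w'\<in>M n. e n * w = e n * w'"
proof -
  obtain y where y: "y \<in> M n" "astar w * e n = y * e n" using M4[OF n, of "astar w"] w by auto
  have "e n * w = astar (astar w * e n)" by (simp add: astar_mult astar_astar e_sa[OF n])
  also have "\<dots> = e n * astar y" using y(2) by (simp add: astar_mult e_sa[OF n])
  finally show ?thesis using y(1) by auto
qed

lemma X_mult_left: assumes n: "n \<ge> 1" and m: "m \<in> M (Suc n)" and x: "x \<in> XS n" shows "m * x \<in> XS n"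
  using x
proof (induction x rule: X_induct)
  case zero then show ?case by simp
next
  case (snoc w a b)
  have ih: "m * w \<in> XS n" and aM: "a \<in> M n" and bM: "b \<in> M n" using snoc by blast+
  obtain a' where a': "a' \<in> M n" "m * a * e n = a' * e n" using M4[OF n, of "m * a"] m MsubS[OF aM] by auto
  have "m * (a * e n * b) = a' * e n * b" using a'(2) by (simp add: mult.assoc[symmetric])
  then have "m * (w + a * e n * b) = m * w + a' * e n * b" by (simp add: distrib_left)
  then show ?case using X_snoc[OF ih a'(1) bM] by simp
qed

lemma X_mult_right: assumes n: "n \<ge> 1" and m: "m \<in> M (Suc n)" and x: "x \<in> XS n" shows "x * m \<in> XS n"
  using x
proof (induction x rule: X_induct)
  case zero then show ?case by simp
next
  case (snoc w a b)
  have ih: "w * m \<in> XS n" and aM: "a \<in> M n" and bM: "b \<in> M n" using snoc by blast+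
  obtain b' where b': "b' \<in> M n" "e n * (b * m) = e n * b'" using eM[OF n, of "b * m"] m MsubS[OF bM] by auto
  have "(w + a * e n * b) * m = w * m + a * e n * b'" using b'(2) by (simp add: distrib_right mult.assoc)
  then show ?case using X_snoc[OF ih aM b'(1)] by simp
qed

lemma X_astar: assumes n: "n \<ge> 1" and x: "x \<in> XS n" shows "astar x \<in> XS n"
  using x
proof (induction x rule: X_induct)
  case zero then show ?case by simp
next
  case (snoc w a b)
  have "astar (w + a * e n * b) = astar w + astar b * e n * astar a"
    by (simp add: astar_add astar_mult e_sa[OF n] mult.assoc)
  have ih: "astar w \<in> XS n" and aM: "a \<in> M n" and bM: "b \<in> M n" using snoc by blast+
  then show ?case using X_snoc[OF ih, of "astar b" "astar a"] \<open>astar (w + a * e n * b) = _\<close> by simp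
qed

end


context mt begin

lemma X_span: assumes n: "n \<ge> 1" shows "\<exists>S. finite S \<and> S \<subseteq> XS n \<and> XS n \<subseteq> clin_span S"
proof -
  obtain B where B: "finite B" "B \<subseteq> M n" "M n = clin_span B" using Mspan by blast
  define S where "S = (\<lambda>(a, b). a * e n * b) ` (B \<times> B)"
  have fS: "finite S" unfolding S_def using B(1) by simp
  have SX: "S \<subseteq> XS n" unfolding S_def using B(2) X_single by (auto simp: subset_iff)
  have inS: "s * e n * s' \<in> clin_span S" if "s \<in> B" "s' \<in> B" for s s'
    using that unfolding S_def by (intro clin_span_base) auto
  have one: "s * e n * b \<in> clin_span S" if s: "s \<in> B" and b: "b \<in> clin_span B" for s b
    using b
  proof (induction b rule: clin_span_induct)
    case zero then show ?case by (simp add: clin_span_zero)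
  next
    case (snoc w c s')
    have "s * e n * (w + cscale c s') = s * e n * w + cscale c (s * e n * s')"
      by (simp add: distrib_left mult_cscale_right)
    then show ?case using snoc inS[OF s] clin_span_add clin_span_scale by metis
  qed
  have two: "a * e n * b \<in> clin_span S" if a: "a \<in> clin_span B" and b: "b \<in> clin_span B" for a b
    using a
  proof (induction a rule: clin_span_induct)
    case zero then show ?case by (simp add: clin_span_zero)
  next
    case (snoc w c s)
    have "(w + cscale c s) * e n * b = w * e n * b + cscale c (s * e n * b)"
      by (simp add: distrib_right mult_cscale_left)
    then show ?case using snoc one[OF _ b] clin_span_add clin_span_scale by metis
  qed
  have "x \<in> clin_span S" if "x \<in> XS n" for x
    using that
  proof (induction x rule: X_induct)
    case zero then show ?case by (simp add: clin_span_zero)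
  next
    case (snoc w a b)
    then show ?case using two B(3) clin_span_add by metis
  qed
  then show ?thesis using fS SX by blast
qed

lemma unit: assumes n: "n \<ge> 1" shows "\<exists>z\<in>XS n. \<forall>x\<in>XS n. z * x = x \<and> x * z = x"
proof -
  obtain S where S: "finite S" "S \<subseteq> XS n" "XS n \<subseteq> clin_span S" using X_span[OF n] by blast
  have XM: "XS n \<subseteq> M (Suc n)" using X_sub[OF n] by blast
  have SM: "S \<subseteq> M (Suc n)" using S(2) XM by blast
  obtain p where p: "p \<in> clin_span S" "\<forall>s\<in>S. tr (Suc n) (astar s * (1 - p)) = 0"
    using ftr.proj[OF ftrM S(1) SM, of 1] by auto
  have pX: "p \<in> XS n" using clin_span_sub[OF p(1) S(2)] X_add X_scale by auto
  have pM: "p \<in> M (Suc n)" using pX XM by blast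
  have hz: "tr (Suc n) (w * p) = tr (Suc n) w" if w: "w \<in> XS n" for w
  proof -
    have wM: "w \<in> M (Suc n)" using w XM by blast
    have "astar w \<in> clin_span S" using X_astar[OF n w] S(3) by blast
    then have "tr (Suc n) (astar (astar w) * (1 - p)) = 0"
      using ftr.orth_span[OF ftrM SM _ p(2)] pM by simp
    then have "tr (Suc n) (w - w * p) = 0" by (simp add: astar_astar right_diff_distrib)
    then show ?thesis using wM pM by (simp add: tdiff)
  qed
  have "p * x = x \<and> x * p = x" if x: "x \<in> XS n" for x
  proof
    have xM: "x \<in> M (Suc n)" using x XM by blast
    define u where "u = p * x - x"
    have uX: "u \<in> XS n" unfolding u_def using X_mult_left[OF n pM x] x X_diff by blast
    have uM: "u \<in> M (Suc n)" using uX XM by blast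
    have usX: "astar u \<in> XS n" using X_astar[OF n uX] .
    have usM: "astar u \<in> M (Suc n)" using usX XM by blast
    have xu: "x * astar u \<in> XS n" using X_mult_left[OF n xM usX] .
    have "tr (Suc n) (astar u * u) = tr (Suc n) (astar u * p * x) - tr (Suc n) (astar u * x)"
      unfolding u_def using usM pM xM by (simp add: right_diff_distrib tdiff mult.assoc)
    also have "tr (Suc n) (astar u * p * x) = tr (Suc n) ((x * astar u) * p)"
      using tcomm[of "astar u * p" "Suc n" x] usM pM xM by (simp add: mult.assoc)
    also have "\<dots> = tr (Suc n) (x * astar u)" using hz[OF xu] .
    also have "\<dots> = tr (Suc n) (astar u * x)" using tcomm usM xM by blast
    finally have "u = 0" using tfaith[OF uM] by simp
    then show "p * x = x" unfolding u_def by simp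
  next
    have xM: "x \<in> M (Suc n)" using x XM by blast
    define v where "v = x * p - x"
    have vX: "v \<in> XS n" unfolding v_def using X_mult_right[OF n pM x] x X_diff by blast
    have vM: "v \<in> M (Suc n)" using vX XM by blast
    have vsX: "astar v \<in> XS n" using X_astar[OF n vX] .
    have vsM: "astar v \<in> M (Suc n)" using vsX XM by blast
    have vx: "astar v * x \<in> XS n" using X_mult_right[OF n xM vsX] .
    have "tr (Suc n) (astar v * v) = tr (Suc n) (astar v * x * p) - tr (Suc n) (astar v * x)"
      unfolding v_def using vsM pM xM by (simp add: right_diff_distrib tdiff mult.assoc)
    also have "tr (Suc n) (astar v * x * p) = tr (Suc n) (astar v * x)" using hz[OF vx] .
    finally have "v = 0" using tfaith[OF vM] by simp
    then show "x * p = x" unfolding v_def by simp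
  qed
  then show ?thesis using pX by blast
qed

lemma decomp: assumes n: "n \<ge> 1" and m: "m \<in> M (Suc n)"
  shows "\<exists>!p. fst p \<in> Xideal M e (Suc n) \<and> snd p \<in> Ycompl M e (Suc n) \<and> m = fst p + snd p"
proof -
  obtain z where z: "z \<in> XS n" "\<forall>x\<in>XS n. z * x = x \<and> x * z = x" using unit[OF n] by blast
  have XM: "XS n \<subseteq> M (Suc n)" using X_sub[OF n] by blast
  have zM: "z \<in> M (Suc n)" using z(1) XM by blast
  have Y: "Ycompl M e (Suc n) = {y \<in> M (Suc n). \<forall>x\<in>XS n. x * y = 0 \<and> y * x = 0}"
    unfolding Ycompl_def Xideal_Suc[OF n] ..
  have mz: "m * z \<in> XS n" using X_mult_left[OF n m z(1)] .
  have "m - m * z \<in> Ycompl M e (Suc n)"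
    unfolding Y
  proof (intro CollectI conjI ballI)
    show "m - m * z \<in> M (Suc n)" using m zM by simp
  next
    fix x assume x: "x \<in> XS n"
    have xm: "x * m \<in> XS n" using X_mult_right[OF n m x] .
    show "x * (m - m * z) = 0" using z(2) xm by (simp add: right_diff_distrib mult.assoc[symmetric])
    show "(m - m * z) * x = 0" using z(2) x by (simp add: left_diff_distrib mult.assoc)
  qed
  then have ex: "fst (m * z, m - m * z) \<in> Xideal M e (Suc n) \<and> snd (m * z, m - m * z) \<in> Ycompl M e (Suc n)
     \<and> m = fst (m * z, m - m * z) + snd (m * z, m - m * z)"
    using mz Xideal_Suc[OF n] by simp
  have uq: "p = (m * z, m - m * z)"
    if p: "fst p \<in> Xideal M e (Suc n)" "snd p \<in> Ycompl M e (Suc n)" "m = fst p + snd p" for p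
  proof -
    have f: "fst p \<in> XS n" using p(1) Xideal_Suc[OF n] by simp
    have s: "z * snd p = 0" "snd p * z = 0" using p(2) z(1) unfolding Y by auto
    have "m * z = fst p * z + snd p * z" using p(3) by (simp add: distrib_right)
    also have "\<dots> = fst p" using s z(2) f by simp
    finally have "fst p = m * z" by simp
    moreover then have "snd p = m - m * z" using p(3) by (simp add: algebra_simps)
    ultimately show ?thesis by (simp add: prod_eq_iff)
  qed
  show ?thesis using ex uq by blast
qed

end


context mt begin

definition Phi :: "nat \<Rightarrow> 'a \<Rightarrow> 'a \<Rightarrow> 'a" where
  "Phi n x = (\<lambda>\<xi>. if \<xi> \<in> M n then cscale D (E (Suc n) (x * \<xi> * e n)) else 0)"

lemma Phi_in: assumes n: "n \<ge> 1" and x: "x \<in> M (Suc n)" shows "Phi n x \<xi> \<in> M n"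
proof (cases "\<xi> \<in> M n")
  case True
  have "x * \<xi> * e n \<in> M (Suc n)" using x MsubS[OF True] e_in[OF n] by simp
  then show ?thesis using True CE_in[of "x * \<xi> * e n" "Suc n"] unfolding Phi_def by simp
qed (simp add: Phi_def)

lemma Phi_basic: assumes n: "n \<ge> 1" and a: "a \<in> M n" and b: "b \<in> M n"
  shows "Phi n (a * e n * b) = lmult M n a \<circ> jones_proj M tr n \<circ> lmult M n b"
proof (rule ext)
  fix \<xi>
  show "Phi n (a * e n * b) \<xi> = (lmult M n a \<circ> jones_proj M tr n \<circ> lmult M n b) \<xi>"
  proof (cases "\<xi> \<in> M n")
    case True
    have bx: "b * \<xi> \<in> M n" using b True by simp
    have Ebx: "E n (b * \<xi>) \<in> M n" using CE_in[OF bx] M_pred by blast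
    have "a * e n * b * \<xi> * e n = a * (e n * (b * \<xi>) * e n)" by (simp add: mult.assoc)
    also have "\<dots> = (a * E n (b * \<xi>)) * e n" using M2[OF n bx] by (simp add: mult.assoc)
    finally have "E (Suc n) (a * e n * b * \<xi> * e n) = cscale \<delta> (a * E n (b * \<xi>))"
      using E_ye[OF n] a Ebx by simp
    then have "Phi n (a * e n * b) \<xi> = a * E n (b * \<xi>)" unfolding Phi_def using True by simp
    moreover have "(lmult M n a \<circ> jones_proj M tr n \<circ> lmult M n b) \<xi> = a * E n (b * \<xi>)"
      unfolding lmult_def jones_proj_def using True bx Ebx by simp
    ultimately show ?thesis by simp
  next
    case False
    then show ?thesis unfolding Phi_def lmult_def jones_proj_def by simp
  qed
qed

lemma Phi_add: assumes n: "n \<ge> 1" and x: "x \<in> M (Suc n)" and y: "y \<in> M (Suc n)"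
  shows "Phi n (x + y) = (\<lambda>\<xi>. Phi n x \<xi> + Phi n y \<xi>)"
proof (rule ext)
  fix \<xi>
  show "Phi n (x + y) \<xi> = Phi n x \<xi> + Phi n y \<xi>"
  proof (cases "\<xi> \<in> M n")
    case True
    have 1: "x * \<xi> * e n \<in> M (Suc n)" "y * \<xi> * e n \<in> M (Suc n)"
      using x y MsubS[OF True] e_in[OF n] by simp_all
    have "(x + y) * \<xi> * e n = x * \<xi> * e n + y * \<xi> * e n" by (simp add: distrib_right)
    then show ?thesis unfolding Phi_def using True CE_add[OF 1] by (simp add: cscale_add_right)
  qed (simp add: Phi_def)
qed

lemma Phi_scale: assumes n: "n \<ge> 1" and x: "x \<in> M (Suc n)"
  shows "Phi n (cscale c x) = (\<lambda>\<xi>. cscale c (Phi n x \<xi>))"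
proof (rule ext)
  fix \<xi>
  show "Phi n (cscale c x) \<xi> = cscale c (Phi n x \<xi>)"
  proof (cases "\<xi> \<in> M n")
    case True
    have 1: "x * \<xi> * e n \<in> M (Suc n)" using x MsubS[OF True] e_in[OF n] by simp
    have "cscale c x * \<xi> * e n = cscale c (x * \<xi> * e n)" by (simp add: mult_cscale_left)
    then show ?thesis unfolding Phi_def using True CE_scale[OF 1] by (simp add: cscale_cscale_comm)
  qed (simp add: Phi_def)
qed

lemma Phi_mult: assumes n: "n \<ge> 1" and x: "x \<in> M (Suc n)" and y: "y \<in> M (Suc n)"
  shows "Phi n (x * y) = Phi n x \<circ> Phi n y"
proof (rule ext)
  fix \<xi>
  show "Phi n (x * y) \<xi> = (Phi n x \<circ> Phi n y) \<xi>"
  proof (cases "\<xi> \<in> M n")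
    case True
    have yx: "y * \<xi> \<in> M (Suc n)" using y MsubS[OF True] by simp
    define w where "w = cscale D (E (Suc n) (y * \<xi> * e n))"
    have w: "w \<in> M n" "y * \<xi> * e n = w * e n" using key[OF n yx] unfolding w_def by (simp_all add: mult.assoc)
    have "Phi n y \<xi> = w" unfolding Phi_def w_def using True by simp
    moreover have "x * y * \<xi> * e n = x * w * e n" using w(2) by (simp add: mult.assoc)
    ultimately show ?thesis unfolding Phi_def using True w(1) by simp
  next
    case False
    then show ?thesis unfolding Phi_def by simp
  qed
qed

lemma Phi_sum: assumes n: "n \<ge> 1" and ab: "\<forall>i<m. a i \<in> M n \<and> b i \<in> M n"
  shows "Phi n (\<Sum>i<m. a i * e n * b i) = basic_op M tr n m a b"
  using ab
proof (induction m)
  case 0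
  show ?case unfolding basic_op_def Phi_def by (simp add: fun_eq_iff)
next
  case (Suc m)
  have ih: "Phi n (\<Sum>i<m. a i * e n * b i) = basic_op M tr n m a b" using Suc by simp
  have abm: "a m \<in> M n" "b m \<in> M n" using Suc.prems by auto
  have sX: "(\<Sum>i<m. a i * e n * b i) \<in> XS n" unfolding XS_def
    by (intro CollectI exI[of _ m] exI[of _ a] exI[of _ b]) (use Suc.prems in auto)
  have sM: "(\<Sum>i<m. a i * e n * b i) \<in> M (Suc n)" using X_sub[OF n sX] .
  have tM: "a m * e n * b m \<in> M (Suc n)" using MsubS abm e_in[OF n] by simp
  have "Phi n (\<Sum>i<Suc m. a i * e n * b i) = Phi n ((\<Sum>i<m. a i * e n * b i) + a m * e n * b m)" by simp
  also have "\<dots> = (\<lambda>\<xi>. Phi n (\<Sum>i<m. a i * e n * b i) \<xi> + Phi n (a m * e n * b m) \<xi>)"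
    using Phi_add[OF n sM tM] .
  also have "\<dots> = basic_op M tr n (Suc m) a b"
    unfolding ih Phi_basic[OF n abm] by (simp add: basic_op_def fun_eq_iff)
  finally show ?case .
qed

lemma Phi_image: assumes n: "n \<ge> 1" shows "Phi n ` XS n = basic_constr M tr n"
proof (intro set_eqI iffI)
  fix T assume "T \<in> Phi n ` XS n"
  then obtain x where x: "x \<in> XS n" "T = Phi n x" by blast
  obtain m :: nat and a b where xs: "x = (\<Sum>i<m. a i * e n * b i)" and ab: "\<forall>i<m. a i \<in> M n \<and> b i \<in> M n"
    using x(1) unfolding XS_def by blast
  show "T \<in> basic_constr M tr n" unfolding basic_constr_def using Phi_sum[OF n ab] x(2) xs ab by blast
next
  fix T assume "T \<in> basic_constr M tr n"
  then obtain m a b where T: "T = basic_op M tr n m a b" and ab: "\<forall>i<m. a i \<in> M n \<and> b i \<in> M n"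
    unfolding basic_constr_def by blast
  have "(\<Sum>i<m. a i * e n * b i) \<in> XS n" unfolding XS_def using ab by blast
  then show "T \<in> Phi n ` XS n" using Phi_sum[OF n ab] T by force
qed

lemma Phi_zero_inj: assumes n: "n \<ge> 1" and u: "u \<in> XS n" and z: "Phi n u = (\<lambda>\<xi>. 0)"
  shows "u = 0"
proof -
  have uM: "u \<in> M (Suc n)" using X_sub[OF n u] .
  have h: "u * \<xi> * e n = 0" if xi: "\<xi> \<in> M n" for \<xi>
  proof -
    have ux: "u * \<xi> \<in> M (Suc n)" using uM MsubS[OF xi] by simp
    have "cscale D (E (Suc n) (u * \<xi> * e n)) = 0" using fun_cong[OF z, of \<xi>] xi unfolding Phi_def by simp
    then show ?thesis using key[OF n ux] by (simp add: mult.assoc)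
  qed
  have "u * v = 0" if v: "v \<in> XS n" for v
    using v
  proof (induction v rule: X_induct)
    case zero then show ?case by simp
  next
    case (snoc w a b)
    have ih: "u * w = 0" and aM: "a \<in> M n" using snoc by blast+
    have "u * (w + a * e n * b) = u * w + (u * a * e n) * b" by (simp add: distrib_left mult.assoc)
    then show ?case using ih h[OF aM] by simp
  qed
  then have "u * astar u = 0" using X_astar[OF n u] by blast
  then have "tr (Suc n) (astar u * u) = 0" using tcomm[of "astar u" "Suc n" u] uM tzero by simp
  then show ?thesis using tfaith[OF uM] by blast
qed

lemma Phi_inj: assumes n: "n \<ge> 1" shows "inj_on (Phi n) (XS n)"
proof (rule inj_onI)
  fix x y assume x: "x \<in> XS n" and y: "y \<in> XS n" and eq: "Phi n x = Phi n y"
  have xM: "x \<in> M (Suc n)" and yM: "y \<in> M (Suc n)" using X_sub[OF n] x y by auto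
  have "Phi n (x + cscale (-1) y) = (\<lambda>\<xi>. Phi n x \<xi> + cscale (-1) (Phi n y \<xi>))"
    using Phi_add[OF n xM, of "cscale (-1) y"] Phi_scale[OF n yM] yM by simp
  also have "\<dots> = (\<lambda>\<xi>. 0)" using eq by (simp add: cscale_minus_one)
  finally have "x + cscale (-1) y = 0"
    using Phi_zero_inj[OF n, of "x + cscale (-1) y"] X_add[OF x X_scale[OF y]] by blast
  then show "x = y" by (simp add: cscale_minus_one)
qed

lemma Phi_F: assumes n: "n \<ge> 1" and x: "x \<in> M (Suc n)" and xi: "\<xi> \<in> M n" and eta: "\<eta> \<in> M n"
  shows "tr n (astar \<eta> * Phi n x \<xi>) = D * tr (Suc n) (astar \<eta> * x * \<xi> * e n)"
proof -
  have w: "x * \<xi> * e n \<in> M (Suc n)" using x MsubS[OF xi] e_in[OF n] by simp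
  have Ew: "E (Suc n) (x * \<xi> * e n) \<in> M n" using CE_in[OF w] by simp
  have es: "astar \<eta> \<in> M n" using eta by simp
  have "tr n (astar \<eta> * Phi n x \<xi>) = tr n (cscale D (astar \<eta> * E (Suc n) (x * \<xi> * e n)))"
    unfolding Phi_def using xi by (simp add: mult_cscale_right)
  also have "\<dots> = D * tr n (astar \<eta> * E (Suc n) (x * \<xi> * e n))" using tscale es Ew by simp
  also have "astar \<eta> * E (Suc n) (x * \<xi> * e n) = E (Suc n) (astar \<eta> * (x * \<xi> * e n))"
    using CE_left[of "astar \<eta>" "Suc n" "x * \<xi> * e n"] es w by simp
  also have "tr n (E (Suc n) (astar \<eta> * (x * \<xi> * e n))) = tr (Suc n) (E (Suc n) (astar \<eta> * (x * \<xi> * e n)))"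
    using tr_Suc CE_in[of "astar \<eta> * (x * \<xi> * e n)" "Suc n"] w MsubS[OF es] by simp
  also have "\<dots> = tr (Suc n) (astar \<eta> * (x * \<xi> * e n))" using CE_tr w MsubS[OF es] by simp
  finally show ?thesis by (simp add: mult.assoc)
qed

lemma Phi_adj: assumes n: "n \<ge> 1" and x: "x \<in> M (Suc n)" and xi: "\<xi> \<in> M n" and eta: "\<eta> \<in> M n"
  shows "l2_inner tr n (Phi n x \<xi>) \<eta> = l2_inner tr n \<xi> (Phi n (astar x) \<eta>)"
proof -
  have xs: "astar x \<in> M (Suc n)" using x by simp
  have P: "Phi n (astar x) \<eta> \<in> M n" using Phi_in[OF n xs] .
  have xiS: "\<xi> \<in> M (Suc n)" and etaS: "\<eta> \<in> M (Suc n)" using MsubS xi eta by auto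
  have eS: "e n \<in> M (Suc n)" using e_in[OF n] .
  have "l2_inner tr n \<xi> (Phi n (astar x) \<eta>) = tr n (astar (Phi n (astar x) \<eta>) * \<xi>)"
    unfolding l2_inner_def ..
  also have "\<dots> = tr n (astar (astar \<xi> * Phi n (astar x) \<eta>))" by (simp add: astar_mult astar_astar)
  also have "\<dots> = cnj (tr n (astar \<xi> * Phi n (astar x) \<eta>))" using tastar P xi by simp
  also have "\<dots> = cnj (D * tr (Suc n) (astar \<xi> * astar x * \<eta> * e n))" using Phi_F[OF n xs eta xi] by simp
  also have "\<dots> = D * cnj (tr (Suc n) (astar \<xi> * astar x * \<eta> * e n))" by simp
  also have "cnj (tr (Suc n) (astar \<xi> * astar x * \<eta> * e n)) = tr (Suc n) (astar (astar \<xi> * astar x * \<eta> * e n))"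
    using tastar[of "astar \<xi> * astar x * \<eta> * e n" "Suc n"] xiS xs etaS eS by simp
  also have "astar (astar \<xi> * astar x * \<eta> * e n) = e n * (astar \<eta> * x * \<xi>)"
    by (simp add: astar_mult astar_astar e_sa[OF n] mult.assoc)
  also have "tr (Suc n) (e n * (astar \<eta> * x * \<xi>)) = tr (Suc n) (astar \<eta> * x * \<xi> * e n)"
    using tcomm[of "e n" "Suc n" "astar \<eta> * x * \<xi>"] eS xiS x etaS by simp
  finally have "l2_inner tr n \<xi> (Phi n (astar x) \<eta>) = D * tr (Suc n) (astar \<eta> * x * \<xi> * e n)" .
  moreover have "l2_inner tr n (Phi n x \<xi>) \<eta> = D * tr (Suc n) (astar \<eta> * x * \<xi> * e n)"
    unfolding l2_inner_def using Phi_F[OF n x xi eta] .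
  ultimately show ?thesis by simp
qed

lemma trace_sum: assumes n: "n \<ge> 1" and ab: "\<forall>i<m. a i \<in> M n \<and> b i \<in> M n"
  shows "D * tr (Suc n) (\<Sum>i<m. a i * e n * b i) = (\<Sum>i<m. tr n (a i * b i))"
proof -
  have eS: "e n \<in> M (Suc n)" using e_in[OF n] .
  have one: "tr (Suc n) (a i * e n * b i) = \<delta> * tr n (a i * b i)" if i: "i < m" for i
  proof -
    have a: "a i \<in> M n" and b: "b i \<in> M n" using ab i by auto
    have aS: "a i \<in> M (Suc n)" and bS: "b i \<in> M (Suc n)" using MsubS a b by auto
    have "tr (Suc n) (a i * e n * b i) = tr (Suc n) (b i * a i * e n)"
      using tcomm[of "a i * e n" "Suc n" "b i"] aS bS eS by (simp add: mult.assoc)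
    also have "\<dots> = \<delta> * tr n (b i * a i)" using item3[OF n] a b by simp
    also have "tr n (b i * a i) = tr n (a i * b i)" using tcomm a b by simp
    finally show ?thesis .
  qed
  have "tr (Suc n) (\<Sum>i<m. a i * e n * b i) = (\<Sum>i<m. tr (Suc n) (a i * e n * b i))"
    using ftr.t_sum[OF ftrM, of "{..<m}" "\<lambda>i. a i * e n * b i" "Suc n"] ab MsubS eS by simp
  also have "\<dots> = (\<Sum>i<m. \<delta> * tr n (a i * b i))" using one by simp
  also have "\<dots> = \<delta> * (\<Sum>i<m. tr n (a i * b i))" by (simp add: sum_distrib_left)
  finally have "D * tr (Suc n) (\<Sum>i<m. a i * e n * b i) = (D * \<delta>) * (\<Sum>i<m. tr n (a i * b i))"
    by (simp add: mult.assoc)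
  then show ?thesis by (simp only: Dd mult_1)
qed

lemma Phi_trace: assumes n: "n \<ge> 1" and x: "x \<in> XS n"
  shows "basic_trace M tr n (Phi n x) = D * tr (Suc n) x"
  unfolding basic_trace_def
proof (rule the_equality)
  obtain m :: nat and a b where xs: "x = (\<Sum>i<m. a i * e n * b i)" and ab: "\<forall>i<m. a i \<in> M n \<and> b i \<in> M n"
    using x unfolding XS_def by blast
  show "\<exists>(m::nat) a b. (\<forall>i<m. a i \<in> M n \<and> b i \<in> M n) \<and> Phi n x = basic_op M tr n m a b \<and>
      D * tr (Suc n) x = (\<Sum>i<m. tr n (a i * b i))"
    using ab Phi_sum[OF n ab] trace_sum[OF n ab] xs by blast
next
  fix c assume "\<exists>(m::nat) a b. (\<forall>i<m. a i \<in> M n \<and> b i \<in> M n) \<and> Phi n x = basic_op M tr n m a b \<and>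
      c = (\<Sum>i<m. tr n (a i * b i))"
  then obtain m :: nat and a b where ab: "\<forall>i<m. a i \<in> M n \<and> b i \<in> M n"
    and P: "Phi n x = basic_op M tr n m a b" and c: "c = (\<Sum>i<m. tr n (a i * b i))" by blast
  have sX: "(\<Sum>i<m. a i * e n * b i) \<in> XS n" unfolding XS_def using ab by blast
  have "x = (\<Sum>i<m. a i * e n * b i)"
    using inj_onD[OF Phi_inj[OF n] _ x sX] P Phi_sum[OF n ab] by simp
  then show "c = D * tr (Suc n) x" using c trace_sum[OF n ab] by simp
qed

end


context mt begin

lemma XS_le: assumes n: "n \<ge> 1" and x: "x \<in> XS n" shows "x \<in> XS (Suc n)"
  using x
proof (induction x rule: X_induct)
  case zero then show ?case by simp
next
  case (snoc w a b)
  have ih: "w \<in> XS (Suc n)" and a: "a \<in> M n" and b: "b \<in> M n" using snoc by blast+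
  have n1: "Suc n \<ge> 1" by simp
  have aeS: "a * e n \<in> M (Suc n)" and ebS: "e n * b \<in> M (Suc n)" using MsubS a b e_in[OF n] by simp_all
  have "(a * e n) * e (Suc n) * (e n * b) = a * (e n * e (Suc n) * e n) * b" by (simp add: mult.assoc)
  also have "\<dots> = a * cscale \<delta> (e n) * b" using e_rel[OF n] by simp
  also have "\<dots> = cscale \<delta> (a * e n * b)" by (simp add: mult_cscale_left mult_cscale_right)
  finally have "cscale D ((a * e n) * e (Suc n) * (e n * b)) = a * e n * b" by simp
  then have "a * e n * b \<in> XS (Suc n)" using X_scale[OF X_single[OF aeS ebS], of D] by metis
  then show ?case using X_add[OF ih] by simp
qed

lemma Xn_sub: assumes n: "n \<ge> 1"
  shows "Xideal M e n \<subseteq> Xideal M e (Suc n) \<and> Xideal M e n \<subseteq> M n"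
proof (cases "n = 1")
  case True
  have "Xideal M e n = {0}" using True unfolding Xideal_def by simp
  moreover have "0 \<in> Xideal M e (Suc n)" using Xideal_Suc[OF n] by simp
  ultimately show ?thesis by simp
next
  case False
  then obtain n' where n': "n = Suc n'" "n' \<ge> 1" using n by (cases n) auto
  have "Xideal M e n = XS n'" using Xideal_Suc[OF n'(2)] n'(1) by simp
  moreover have "Xideal M e (Suc n) = XS n" using Xideal_Suc[OF n] .
  ultimately show ?thesis using XS_le[OF n'(2)] X_sub[OF n'(2)] n'(1) by auto
qed

lemma item8a: assumes n: "n \<ge> 1" and y: "y \<in> Ycompl M e (Suc n)" and x: "x \<in> Xideal M e n"
  shows "y * x = 0"
  using y x Xn_sub[OF n] unfolding Ycompl_def by blast

lemma item8b: assumes n: "n \<ge> 1" shows "E (Suc n) ` Ycompl M e (Suc n) \<subseteq> Ycompl M e n"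
proof
  fix z assume "z \<in> E (Suc n) ` Ycompl M e (Suc n)"
  then obtain y where y: "y \<in> Ycompl M e (Suc n)" "z = E (Suc n) y" by blast
  have yM: "y \<in> M (Suc n)" using y(1) unfolding Ycompl_def by blast
  have zM: "z \<in> M n" using CE_in[OF yM] y(2) by simp
  show "z \<in> Ycompl M e n" unfolding Ycompl_def
  proof (intro CollectI conjI ballI zM)
    fix x assume x: "x \<in> Xideal M e n"
    have xM: "x \<in> M n" and xS: "x \<in> Xideal M e (Suc n)" using x Xn_sub[OF n] by blast+
    have xy: "x * y = 0" and yx: "y * x = 0" using y(1) xS unfolding Ycompl_def by blast+
    show "x * z = 0" using CE_left[of x "Suc n" y] xM yM xy y(2) by simp
    show "z * x = 0" using CE_right[of x "Suc n" y] xM yM yx y(2) by simp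
  qed
qed

lemma X_astar_gen: assumes k: "k \<ge> 1" and x: "x \<in> Xideal M e k" shows "astar x \<in> Xideal M e k"
proof (cases "k = 1")
  case True then show ?thesis using x unfolding Xideal_def by simp
next
  case False
  then obtain k' where k': "k = Suc k'" "k' \<ge> 1" using k by (cases k) auto
  then show ?thesis using X_astar[OF k'(2)] x Xideal_Suc[OF k'(2)] by simp
qed

lemma Y_step: assumes k: "k \<ge> 1" and Y: "Ycompl M e k = {0}" shows "Ycompl M e (Suc k) = {0}"
proof -
  have "y = 0" if y: "y \<in> Ycompl M e (Suc k)" for y
  proof -
    have yM: "y \<in> M (Suc k)" using y unfolding Ycompl_def by blast
    define u where "u = astar y * y"
    have uM: "u \<in> M (Suc k)" unfolding u_def using yM by simp
    have "u \<in> Ycompl M e (Suc k)" unfolding Ycompl_def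
    proof (intro CollectI conjI ballI uM)
      fix x assume x: "x \<in> Xideal M e (Suc k)"
      have xs: "astar x \<in> Xideal M e (Suc k)" using X_astar_gen[of "Suc k" x] x by simp
      have "y * astar x = 0" using y xs unfolding Ycompl_def by blast
      moreover have "x * astar y = astar (y * astar x)" by (simp add: astar_mult astar_astar)
      ultimately have "x * astar y = 0" by simp
      then show "x * u = 0" unfolding u_def by (simp add: mult.assoc[symmetric])
      have "y * x = 0" using y x unfolding Ycompl_def by blast
      then show "u * x = 0" unfolding u_def by (simp add: mult.assoc)
    qed
    then have "E (Suc k) u \<in> Ycompl M e k" using item8b[OF k] by blast
    then have "E (Suc k) u = 0" using Y by blast
    then have "tr (Suc k) u = 0" using CE_tr[OF uM] tzero by simp
    then show "y = 0" using tfaith[OF yM] unfolding u_def by blast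
  qed
  moreover have "0 \<in> Ycompl M e (Suc k)" unfolding Ycompl_def by simp
  ultimately show ?thesis by blast
qed

lemma item9: assumes n: "n \<ge> 1" and Y: "Ycompl M e n = {0}" shows "\<forall>k\<ge>n. Ycompl M e k = {0}"
proof (intro allI impI)
  fix k assume "n \<le> k"
  then show "Ycompl M e k = {0}"
  proof (induction k rule: dec_induct)
    case base then show ?case using Y .
  next
    case (step k)
    then show ?case using Y_step[of k] n by simp
  qed
qed

end


theorem mainTheorem4:
  fixes M :: "nat \<Rightarrow> 'a::complex_star_algebra set"
    and tr :: "nat \<Rightarrow> 'a \<Rightarrow> complex"
    and e :: "nat \<Rightarrow> 'a"
    and d :: real
    and n :: nat
  assumes tower: "markov_tower M tr e d"
    and n1: "n \<ge> 1"
  shows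
   "\<comment> \<open>(1)\<close>
    inj_on (\<lambda>y. y * e n) (M n) \<and>
    \<comment> \<open>(2)\<close>
    (\<forall>x\<in>M (Suc n).
       cscale (complex_of_real (d\<^sup>2)) (condexp M tr (Suc n) (x * e n)) \<in> M n \<and>
       x * e n = cscale (complex_of_real (d\<^sup>2)) (condexp M tr (Suc n) (x * e n)) * e n \<and>
       (\<forall>y\<in>M n. x * e n = y * e n \<longrightarrow>
          y = cscale (complex_of_real (d\<^sup>2)) (condexp M tr (Suc n) (x * e n)))) \<and>
    \<comment> \<open>(3)\<close>
    (\<forall>x\<in>M n. tr (Suc n) (x * e n) = complex_of_real (1 / d\<^sup>2) * tr n x) \<and>
    \<comment> \<open>(4)\<close>
    {e n * x * e n | x. x \<in> M (Suc n)} = {y * e n | y. y \<in> M (n - 1)} \<and>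
    \<comment> \<open>(5)\<close>
    (Xideal M e (Suc n) \<subseteq> M (Suc n) \<and>
     (\<forall>x\<in>Xideal M e (Suc n). \<forall>y\<in>Xideal M e (Suc n). x + y \<in> Xideal M e (Suc n)) \<and>
     (\<forall>c. \<forall>x\<in>Xideal M e (Suc n). cscale c x \<in> Xideal M e (Suc n)) \<and>
     (\<forall>x\<in>Xideal M e (Suc n). \<forall>m\<in>M (Suc n).
        m * x \<in> Xideal M e (Suc n) \<and> x * m \<in> Xideal M e (Suc n)) \<and>
     (\<forall>x\<in>Xideal M e (Suc n). astar x \<in> Xideal M e (Suc n)) \<and>
     (\<forall>m\<in>M (Suc n). \<exists>!p. fst p \<in> Xideal M e (Suc n) \<and> snd p \<in> Ycompl M e (Suc n) \<and>
                          m = fst p + snd p)) \<and>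
    \<comment> \<open>(6) and (7)\<close>
    (\<exists>\<Phi>. bij_betw \<Phi> (Xideal M e (Suc n)) (basic_constr M tr n) \<and>
        (\<forall>a\<in>M n. \<forall>b\<in>M n.
           \<Phi> (a * e n * b) = lmult M n a \<circ> jones_proj M tr n \<circ> lmult M n b) \<and>
        (\<forall>x\<in>Xideal M e (Suc n). \<forall>y\<in>Xideal M e (Suc n).
           \<Phi> (x + y) = (\<lambda>\<xi>. \<Phi> x \<xi> + \<Phi> y \<xi>) \<and> \<Phi> (x * y) = \<Phi> x \<circ> \<Phi> y) \<and>
        (\<forall>c. \<forall>x\<in>Xideal M e (Suc n). \<Phi> (cscale c x) = (\<lambda>\<xi>. cscale c (\<Phi> x \<xi>))) \<and>
        (\<forall>x\<in>Xideal M e (Suc n). \<forall>\<xi>\<in>M n. \<forall>\<eta>\<in>M n.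
           l2_inner tr n (\<Phi> x \<xi>) \<eta> = l2_inner tr n \<xi> (\<Phi> (astar x) \<eta>)) \<and>
        (\<forall>x\<in>Xideal M e (Suc n).
           basic_trace M tr n (\<Phi> x) = complex_of_real (d\<^sup>2) * tr (Suc n) x)) \<and>
    \<comment> \<open>(8)\<close>
    (\<forall>y\<in>Ycompl M e (Suc n). \<forall>x\<in>Xideal M e n. y * x = 0) \<and>
    condexp M tr (Suc n) ` Ycompl M e (Suc n) \<subseteq> Ycompl M e n \<and>
    \<comment> \<open>(9)\<close>
    (Ycompl M e n = {0} \<longrightarrow> (\<forall>k\<ge>n. Ycompl M e k = {0}))"
proof -
  interpret mt M tr e d using tower by (simp add: mt_def)
  have XE: "Xideal M e (Suc n) = XS n" using Xideal_Suc[OF n1] .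
  have XM: "\<And>x. x \<in> XS n \<Longrightarrow> x \<in> M (Suc n)" using X_sub[OF n1] .
  have p2: "\<forall>x\<in>M (Suc n).
       cscale (complex_of_real (d\<^sup>2)) (condexp M tr (Suc n) (x * e n)) \<in> M n \<and>
       x * e n = cscale (complex_of_real (d\<^sup>2)) (condexp M tr (Suc n) (x * e n)) * e n \<and>
       (\<forall>y\<in>M n. x * e n = y * e n \<longrightarrow>
          y = cscale (complex_of_real (d\<^sup>2)) (condexp M tr (Suc n) (x * e n)))"
  proof (intro ballI conjI impI)
    fix x assume x: "x \<in> M (Suc n)"
    note k = key[OF n1 x]
    show "cscale D (E (Suc n) (x * e n)) \<in> M n" using k by blast
    show "x * e n = cscale D (E (Suc n) (x * e n)) * e n" using k by blast
    fix y assume y: "y \<in> M n" and eq: "x * e n = y * e n"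
    show "y = cscale D (E (Suc n) (x * e n))"
      using inj_onD[OF inj1[OF n1], of y "cscale D (E (Suc n) (x * e n))"] k y eq by simp
  qed
  have p5: "Xideal M e (Suc n) \<subseteq> M (Suc n) \<and>
     (\<forall>x\<in>Xideal M e (Suc n). \<forall>y\<in>Xideal M e (Suc n). x + y \<in> Xideal M e (Suc n)) \<and>
     (\<forall>c. \<forall>x\<in>Xideal M e (Suc n). cscale c x \<in> Xideal M e (Suc n)) \<and>
     (\<forall>x\<in>Xideal M e (Suc n). \<forall>m\<in>M (Suc n).
        m * x \<in> Xideal M e (Suc n) \<and> x * m \<in> Xideal M e (Suc n)) \<and>
     (\<forall>x\<in>Xideal M e (Suc n). astar x \<in> Xideal M e (Suc n)) \<and>
     (\<forall>m\<in>M (Suc n). \<exists>!p. fst p \<in> Xideal M e (Suc n) \<and> snd p \<in> Ycompl M e (Suc n) \<and>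
                          m = fst p + snd p)"
    unfolding XE
  proof (intro conjI ballI allI)
    show "XS n \<subseteq> M (Suc n)" using XM by blast
    show "x + y \<in> XS n" if "x \<in> XS n" "y \<in> XS n" for x y using X_add that .
    show "cscale c x \<in> XS n" if "x \<in> XS n" for c x using X_scale that .
    show "m * x \<in> XS n" if "x \<in> XS n" "m \<in> M (Suc n)" for x m using X_mult_left[OF n1 that(2,1)] .
    show "x * m \<in> XS n" if "x \<in> XS n" "m \<in> M (Suc n)" for x m using X_mult_right[OF n1 that(2,1)] .
    show "astar x \<in> XS n" if "x \<in> XS n" for x using X_astar[OF n1 that] .
    show "\<exists>!p. fst p \<in> XS n \<and> snd p \<in> Ycompl M e (Suc n) \<and> m = fst p + snd p"
      if "m \<in> M (Suc n)" for m using decomp[OF n1 that] unfolding XE .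
  qed
  have p6: "\<exists>\<Phi>. bij_betw \<Phi> (Xideal M e (Suc n)) (basic_constr M tr n) \<and>
        (\<forall>a\<in>M n. \<forall>b\<in>M n.
           \<Phi> (a * e n * b) = lmult M n a \<circ> jones_proj M tr n \<circ> lmult M n b) \<and>
        (\<forall>x\<in>Xideal M e (Suc n). \<forall>y\<in>Xideal M e (Suc n).
           \<Phi> (x + y) = (\<lambda>\<xi>. \<Phi> x \<xi> + \<Phi> y \<xi>) \<and> \<Phi> (x * y) = \<Phi> x \<circ> \<Phi> y) \<and>
        (\<forall>c. \<forall>x\<in>Xideal M e (Suc n). \<Phi> (cscale c x) = (\<lambda>\<xi>. cscale c (\<Phi> x \<xi>))) \<and>
        (\<forall>x\<in>Xideal M e (Suc n). \<forall>\<xi>\<in>M n. \<forall>\<eta>\<in>M n.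
           l2_inner tr n (\<Phi> x \<xi>) \<eta> = l2_inner tr n \<xi> (\<Phi> (astar x) \<eta>)) \<and>
        (\<forall>x\<in>Xideal M e (Suc n).
           basic_trace M tr n (\<Phi> x) = complex_of_real (d\<^sup>2) * tr (Suc n) x)"
  proof (intro exI[of _ "Phi n"] conjI ballI allI)
    show "bij_betw (Phi n) (Xideal M e (Suc n)) (basic_constr M tr n)"
      unfolding XE bij_betw_def using Phi_inj[OF n1] Phi_image[OF n1] by blast
    show "Phi n (a * e n * b) = lmult M n a \<circ> jones_proj M tr n \<circ> lmult M n b"
      if "a \<in> M n" "b \<in> M n" for a b using Phi_basic[OF n1 that] .
    fix x assume x: "x \<in> Xideal M e (Suc n)"
    then have xM: "x \<in> M (Suc n)" using XE XM by simp
    show "Phi n (cscale c x) = (\<lambda>\<xi>. cscale c (Phi n x \<xi>))" for c using Phi_scale[OF n1 xM] .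
    show "l2_inner tr n (Phi n x \<xi>) \<eta> = l2_inner tr n \<xi> (Phi n (astar x) \<eta>)"
      if "\<xi> \<in> M n" "\<eta> \<in> M n" for \<xi> \<eta> using Phi_adj[OF n1 xM that] .
    show "basic_trace M tr n (Phi n x) = complex_of_real (d\<^sup>2) * tr (Suc n) x"
      using Phi_trace[OF n1] x XE by simp
    fix y assume y: "y \<in> Xideal M e (Suc n)"
    then have yM: "y \<in> M (Suc n)" using XE XM by simp
    show "Phi n (x + y) = (\<lambda>\<xi>. Phi n x \<xi> + Phi n y \<xi>)" using Phi_add[OF n1 xM yM] .
    show "Phi n (x * y) = Phi n x \<circ> Phi n y" using Phi_mult[OF n1 xM yM] .
  qed
  have p3: "\<forall>x\<in>M n. tr (Suc n) (x * e n) = complex_of_real (1 / d\<^sup>2) * tr n x"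
    using item3[OF n1] by blast
  have p8: "\<forall>y\<in>Ycompl M e (Suc n). \<forall>x\<in>Xideal M e n. y * x = 0" using item8a[OF n1] by blast
  have p9: "Ycompl M e n = {0} \<longrightarrow> (\<forall>k\<ge>n. Ycompl M e k = {0})" using item9[OF n1] by blast
  show ?thesis
    by (rule conjI[OF inj1[OF n1] conjI[OF p2 conjI[OF p3 conjI[OF item4[OF n1]
          conjI[OF p5 conjI[OF p6 conjI[OF p8 conjI[OF item8b[OF n1] p9]]]]]]]])
qed



end
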